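(* Let $q$ be an odd prime power, $d$ an odd positive integer, and $A\subset\mathbb F_q^d$. Let $\mathcal{SQ}(A)$ and $\mathcal{ZR}(A)$ be the number of pairs $(x,y)\in A\times A$ with $\eta(\|x-y\|)=1$ and with $\eta(\|x-y\|)=0$, respectively, and let $\Omega^0(A)=\sum_{m\in\mathbb F_q^d:\ \|m\|=0}|\widehat{A}(m)|^2$. \begin{enumerate} \item If $d\equiv 3\pmod 4$ and $q\equiv 3\pmod 4$, then $$\mathcal{SQ}(A)+\frac{\mathcal{ZR}(A)}{2}=\frac{|A|^2}{2}-\frac{q^{\frac{3d+1}{2}}}{2}\Omega^0(A)+\frac{q^{\frac{d-1}{2}}|A|}{2}.$$ \item If $d\equiv 1\pmod 4$, or $d\equiv 3\pmod 4$ and $q\equiv 1\pmod 4$, then $$\mathcal{SQ}(A)+\frac{\mathcal{ZR}(A)}{2}=\frac{|A|^2}{2}+\frac{q^{\frac{3d+1}{2}}}{2}\Omega^0(A)-\frac{q^{\frac{d-1}{2}}|A|}{2}.$$ \end{enumerate}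
   Context: For $x\in\mathbb F_q^d$, $\|x\|=x_1^2+\cdots+x_d^2$. $\eta$ is the quadratic character of $\mathbb F_q$ with $\eta(0)=0$. $\chi$ is the canonical nontrivial additive character of $\mathbb F_q$, and for $A\subset\mathbb F_q^d$, $\widehat{A}(m)=q^{-d}\sum_{x\in A}\chi(-m\cdot x)$ is the Fourier transform of the indicator function of $A$. *)

theory Defs
  imports "HOL-Analysis.Analysis"
begin

text \<open>Finite field F_q is modelled by a type 'a of class {finite, field};
  F_q^d is 'a^'n with d = CARD('n).\<close>

definition sqnorm :: "'a::field^'n \<Rightarrow> 'a" where
  "sqnorm x = (\<Sum>i\<in>UNIV. (x$i)^2)"

definition dotp :: "'a::field^'n \<Rightarrow> 'a^'n \<Rightarrow> 'a" where
  "dotp m x = (\<Sum>i\<in>UNIV. m$i * x$i)"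

definition qchar :: "'a::{finite,field} \<Rightarrow> int" where
  "qchar a = (if a = 0 then 0 else if (\<exists>b. a = b^2) then 1 else -1)"

definition field_deg :: "'a::{finite,field} itself \<Rightarrow> nat" where
  "field_deg _ = (THE n. CARD('a) = CHAR('a) ^ n)"

definition ftrace :: "'a::{finite,field} \<Rightarrow> 'a" where
  "ftrace x = (\<Sum>i<field_deg TYPE('a). x ^ (CHAR('a) ^ i))"

definition ftrace_nat :: "'a::{finite,field} \<Rightarrow> nat" where
  "ftrace_nat x = (THE k. k < CHAR('a) \<and> of_nat k = ftrace x)"

definition addchar :: "'a::{finite,field} \<Rightarrow> complex" where
  "addchar x = cis (2 * pi * real (ftrace_nat x) / real CHAR('a))"

definition fourier :: "('a::{finite,field}^'n) set \<Rightarrow> 'a^'n \<Rightarrow> complex" where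
  "fourier A m = (\<Sum>x\<in>A. addchar (- dotp m x)) / of_nat CARD('a) ^ CARD('n)"

definition SQ :: "('a::{finite,field}^'n) set \<Rightarrow> nat" where
  "SQ A = card {(x,y). x \<in> A \<and> y \<in> A \<and> qchar (sqnorm (x - y)) = 1}"

definition ZR :: "('a::{finite,field}^'n) set \<Rightarrow> nat" where
  "ZR A = card {(x,y). x \<in> A \<and> y \<in> A \<and> qchar (sqnorm (x - y)) = 0}"

definition Omega0 :: "('a::{finite,field}^'n) set \<Rightarrow> real" where
  "Omega0 A = (\<Sum>m\<in>{m. sqnorm m = 0}. (cmod (fourier A m))^2)"

end

theory Submission
  imports Defs "HOL-Computational_Algebra.Computational_Algebra" "HOL-Number_Theory.Cong"
begin

lemma char_prime: "prime CHAR('a::{finite,field})"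
  by (rule prime_CHAR_semidom) (simp add: finite_imp_CHAR_pos)

lemma char_gt1: "CHAR('a::{finite,field}) > 1"
  using char_prime[where 'a='a] prime_gt_1_nat by blast

lemma power_card_same: "(x::'a::{finite,field}) ^ CARD('a) = x"
proof (cases "x = 0")
  case False
  have "x * (\<Prod>y\<in>UNIV-{0}. x * y) = x * x ^ (card (UNIV :: 'a set) - 1) * \<Prod>(UNIV-{0})"
    by (simp add: prod.distrib mult_ac)
  also have "x * x ^ (card (UNIV :: 'a set) - 1) = x ^ Suc (card (UNIV :: 'a set) - 1)"
    by (subst power_Suc) auto
  also have "Suc (card (UNIV :: 'a set) - 1) = card (UNIV :: 'a set)"
    using finite_UNIV_card_ge_0[where ?'a = 'a] by simp
  also have "(\<Prod>y\<in>UNIV-{0}. x * y) = (\<Prod>y\<in>UNIV-{0}. y)"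
    by (rule prod.reindex_bij_witness[of _ "\<lambda>y. y / x" "\<lambda>y. x * y"]) (use False in auto)
  finally show ?thesis
    by simp
qed (use finite_UNIV_card_ge_0[where ?'a = 'a] in auto)

lemma card_ge2: "CARD('a::{finite,field}) \<ge> 2"
proof -
  have "{0::'a, 1} \<subseteq> UNIV" by simp
  hence "card {0::'a,1} \<le> CARD('a)" by (intro card_mono) auto
  thus ?thesis by simp
qed

lemma power_card_minus1: "(x::'a::{finite,field}) \<noteq> 0 \<Longrightarrow> x ^ (CARD('a) - 1) = 1"
proof -
  assume "x \<noteq> 0"
  have "x * x ^ (CARD('a) - 1) = x ^ CARD('a)"
    using card_ge2[where 'a='a] by (simp flip: power_Suc)
  also have "\<dots> = x * 1" by (simp add: power_card_same)
  finally show ?thesis using \<open>x \<noteq> 0\<close> by simp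
qed

lemma of_nat_mod_char: "(of_nat (n mod CHAR('a)) :: 'a::{finite,field}) = of_nat n"
  by (simp add: of_nat_eq_iff_cong_CHAR cong_def)

lemma of_nat_inj_char: "m < CHAR('a) \<Longrightarrow> n < CHAR('a) \<Longrightarrow> (of_nat m :: 'a::{finite,field}) = of_nat n \<Longrightarrow> m = n"
  by (simp add: of_nat_eq_iff_cong_CHAR cong_less_modulus_unique_nat)

lemma of_nat_char_minus1: "(of_nat (CHAR('a) - 1) :: 'a::{finite,field}) = -1"
proof -
  have "CHAR('a) - 1 + 1 = CHAR('a)" using char_gt1[where 'a='a] by simp
  hence "(of_nat (CHAR('a) - 1) :: 'a) + 1 = of_nat CHAR('a)"
    by (metis of_nat_1 of_nat_add)
  thus ?thesis by (simp add: eq_neg_iff_add_eq_0)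
qed


definition pclosed :: "'a::{finite,field} set \<Rightarrow> bool" where
  "pclosed V \<longleftrightarrow> 0 \<in> V \<and> (\<forall>x\<in>V. \<forall>y\<in>V. x + y \<in> V) \<and> (\<forall>c x. x \<in> V \<longrightarrow> of_nat c * x \<in> V)"

lemma inverse_of_nat_in: "\<exists>k. inverse (of_nat c :: 'a::{finite,field}) = of_nat k"
proof (cases "(of_nat c :: 'a) = 0")
  case True thus ?thesis by (intro exI[of _ 0]) simp
next
  case False
  have "(of_nat c :: 'a) * of_nat c ^ (CARD('a) - 2) = of_nat c ^ (CARD('a) - 1)"
    using card_ge2[where 'a='a]
    by (simp flip: power_Suc add: Suc_diff_Suc numeral_2_eq_2)
  also have "\<dots> = 1" using False by (rule power_card_minus1)
  finally have "inverse (of_nat c :: 'a) = of_nat (c ^ (CARD('a) - 2))"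
    using False by (simp add: field_simps inverse_eq_divide)
  thus ?thesis by blast
qed

lemma pclosed_ext:
  fixes V :: "'a::{finite,field} set"
  assumes V: "pclosed V" and a: "a \<notin> V"
  defines "V' \<equiv> (\<lambda>(v,c). v + of_nat c * a) ` (V \<times> {..<CHAR('a)})"
  shows "pclosed V'" "card V' = CHAR('a) * card V"
proof -
  let ?p = "CHAR('a)"
  have p1: "?p > 1" by (rule char_gt1)
  have Vadd: "x \<in> V \<Longrightarrow> y \<in> V \<Longrightarrow> x + y \<in> V" for x y using V by (auto simp: pclosed_def)
  have Vsc: "x \<in> V \<Longrightarrow> of_nat c * x \<in> V" for x c using V by (auto simp: pclosed_def)
  have Vneg: "x \<in> V \<Longrightarrow> - x \<in> V" for x
    using Vsc[of x "?p - 1"] of_nat_char_minus1[where 'a='a] by simp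
  have V0: "0 \<in> V" using V by (auto simp: pclosed_def)
  have mem: "v \<in> V \<Longrightarrow> v + of_nat c * a \<in> V'" for v c
  proof -
    assume "v \<in> V"
    have "v + of_nat c * a = v + of_nat (c mod ?p) * a" by (simp add: of_nat_mod_char)
    moreover have "c mod ?p < ?p" using p1 by simp
    ultimately show ?thesis unfolding V'_def using \<open>v \<in> V\<close> by force
  qed
  show "pclosed V'"
    unfolding pclosed_def
  proof (intro conjI ballI allI impI)
    show "0 \<in> V'" using mem[OF V0, of 0] by simp
  next
    fix x y assume "x \<in> V'" "y \<in> V'"
    then obtain v1 c1 v2 c2 where "v1 \<in> V" "v2 \<in> V" "x = v1 + of_nat c1 * a" "y = v2 + of_nat c2 * a"
      unfolding V'_def by auto
    hence "x + y = (v1 + v2) + of_nat (c1 + c2) * a" by (simp add: algebra_simps)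
    thus "x + y \<in> V'" using mem[OF Vadd[OF \<open>v1 \<in> V\<close> \<open>v2 \<in> V\<close>], of "c1 + c2"] by simp
  next
    fix c x assume "x \<in> V'"
    then obtain v1 c1 where "v1 \<in> V" "x = v1 + of_nat c1 * a"
      unfolding V'_def by auto
    hence "of_nat c * x = of_nat c * v1 + of_nat (c * c1) * a" by (simp add: algebra_simps)
    thus "of_nat c * x \<in> V'" using mem[OF Vsc[OF \<open>v1 \<in> V\<close>], of c "c * c1"] by simp
  qed
  have inj: "inj_on (\<lambda>(v,c). v + of_nat c * a) (V \<times> {..<?p})"
  proof (rule inj_onI, clarsimp)
    fix v1 c1 v2 c2 assume h: "v1 \<in> V" "c1 < ?p" "v2 \<in> V" "c2 < ?p"
      "v1 + of_nat c1 * a = v2 + of_nat c2 * a"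
    show "v1 = v2 \<and> c1 = c2"
    proof (cases "c1 = c2")
      case True thus ?thesis using h by simp
    next
      case False
      hence ne: "(of_nat c1 :: 'a) \<noteq> of_nat c2" using of_nat_inj_char h by blast
      define e :: 'a where "e = of_nat c1 + of_nat ((?p - 1) * c2)"
      have e: "e = of_nat c1 - of_nat c2" unfolding e_def using of_nat_char_minus1[where 'a='a] by simp
      have "e * a = v2 - v1" using h(5) unfolding e by (simp add: algebra_simps)
      moreover have "e \<noteq> 0" using ne e by simp
      ultimately have "a = inverse e * (v2 - v1)" by (simp add: field_simps)
      moreover obtain k where "inverse e = of_nat k"
        using inverse_of_nat_in[of "c1 + (?p - 1) * c2"] unfolding e_def by (metis of_nat_add)
      ultimately have "a = of_nat k * (v2 + - v1)" by simp
      hence "a \<in> V" using Vsc[OF Vadd[OF h(3) Vneg[OF h(1)]], of k] by simp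
      thus ?thesis using a by simp
    qed
  qed
  show "card V' = ?p * card V"
    unfolding V'_def using card_image[OF inj] by (simp add: card_cartesian_product)
qed

lemma pclosed_card_power:
  assumes "pclosed (V :: 'a::{finite,field} set)" "card V = CHAR('a) ^ k"
  shows "\<exists>n. CARD('a) = CHAR('a) ^ n"
  using assms
proof (induction "CARD('a) - card V" arbitrary: V k rule: less_induct)
  case less
  show ?case
  proof (cases "V = UNIV")
    case True thus ?thesis using less by auto
  next
    case False
    then obtain a where a: "a \<notin> V" by auto
    define V' where "V' = (\<lambda>(v,c). v + of_nat c * a) ` (V \<times> {..<CHAR('a)})"
    have 1: "pclosed V'" "card V' = CHAR('a) * card V"
      using pclosed_ext[OF less(2) a] unfolding V'_def by auto
    have "card V > 0" using less(3) char_gt1[where 'a='a] by simp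
    hence "card V < card V'" using 1 char_gt1[where 'a='a] by simp
    moreover have "card V' \<le> CARD('a)" by (rule card_mono) auto
    ultimately have "CARD('a) - card V' < CARD('a) - card V" by simp
    thus ?thesis using less(1)[OF _ 1(1), of "Suc k"] 1(2) less(3) by simp
  qed
qed

lemma card_char_power: "\<exists>n. CARD('a::{finite,field}) = CHAR('a) ^ n"
  by (rule pclosed_card_power[of "{0}" 0]) (auto simp: pclosed_def)

lemma field_deg: "CARD('a::{finite,field}) = CHAR('a) ^ field_deg TYPE('a)"
proof -
  have "\<exists>!n. CARD('a) = CHAR('a) ^ n"
    using card_char_power[where 'a='a] char_gt1[where 'a='a] by (auto simp: power_inject_exp)
  thus ?thesis unfolding field_deg_def by (rule theI')
qed

lemma field_deg_pos: "field_deg TYPE('a::{finite,field}) > 0"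
  using field_deg[where 'a='a] card_ge2[where 'a='a] by (cases "field_deg TYPE('a)") auto

lemma of_nat_pow_char: "(of_nat k :: 'a::{finite,field}) ^ CHAR('a) = of_nat k"
proof (induction k)
  case 0 thus ?case using char_gt1[where 'a='a] by simp
next
  case (Suc k)
  have "(of_nat (Suc k) :: 'a) ^ CHAR('a) = (1 + of_nat k) ^ CHAR('a)" by simp
  also have "\<dots> = 1 ^ CHAR('a) + of_nat k ^ CHAR('a)"
    by (rule freshmans_dream[OF char_prime refl])
  finally show ?case using Suc by simp
qed

lemma frob_fixed:
  assumes "(y :: 'a::{finite,field}) ^ CHAR('a) = y"
  shows "y \<in> of_nat ` {..<CHAR('a)}"
proof -
  let ?p = "CHAR('a)"
  define R :: "'a poly" where "R = monom 1 ?p - [:0,1:]"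
  have p2: "?p \<ge> 2" using char_gt1[where 'a='a] by simp
  have pR: "poly R x = x ^ ?p - x" for x by (simp add: R_def poly_monom)
  have cR: "coeff R ?p = 1" using p2 by (simp add: R_def coeff_pCons split: nat.splits)
  hence R0: "R \<noteq> 0" by auto
  have dR: "degree R \<le> ?p" unfolding R_def
    by (rule degree_diff_le) (use p2 in \<open>auto intro: degree_monom_le simp: degree_pCons_eq_if\<close>)
  have fin: "finite {x. poly R x = 0}" using R0 by (rule poly_roots_finite)
  have c1: "card {x. poly R x = 0} \<le> ?p" using card_poly_roots_bound[OF R0] dR by simp
  have sub: "of_nat ` {..<?p} \<subseteq> {x. poly R x = 0}" by (auto simp: pR of_nat_pow_char)
  have inj: "inj_on (of_nat :: nat \<Rightarrow> 'a) {..<?p}" by (auto intro!: inj_onI of_nat_inj_char)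
  have c2: "card (of_nat ` {..<?p} :: 'a set) = ?p" using card_image[OF inj] by simp
  have "of_nat ` {..<?p} = {x. poly R x = 0}"
    using card_subset_eq[OF fin sub] c1 c2 card_mono[OF fin sub] by simp
  moreover have "y \<in> {x. poly R x = 0}" using assms by (simp add: pR)
  ultimately show ?thesis by simp
qed

lemma ftrace_add: "ftrace ((x::'a::{finite,field}) + y) = ftrace x + ftrace y"
  unfolding ftrace_def sum.distrib[symmetric] by (intro sum.cong refl freshmans_dream'[OF char_prime refl])

lemma ftrace_0: "ftrace (0::'a::{finite,field}) = 0"
  unfolding ftrace_def using char_gt1[where 'a='a] by (simp add: power_0_left)

lemma ftrace_pow: "ftrace (x::'a::{finite,field}) ^ CHAR('a) = ftrace x"
proof -
  let ?p = "CHAR('a)" and ?n = "field_deg TYPE('a)"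
  define g where "g i = x ^ (?p ^ i)" for i
  have "ftrace x ^ ?p = (\<Sum>i<?n. g i ^ ?p)"
    unfolding ftrace_def g_def by (rule freshmans_dream_sum[OF char_prime refl])
  also have "\<dots> = (\<Sum>i<?n. g (Suc i))"
    by (simp add: g_def power_mult[symmetric] mult.commute)
  also have "\<dots> = (\<Sum>i<?n. g i)"
  proof -
    have "g ?n = g 0" unfolding g_def by (simp flip: field_deg add: power_card_same)
    moreover have "(\<Sum>i<Suc ?n. g i) = g 0 + (\<Sum>i<?n. g (Suc i))" by (rule sum.lessThan_Suc_shift)
    moreover have "(\<Sum>i<Suc ?n. g i) = (\<Sum>i<?n. g i) + g ?n" by simp
    ultimately show ?thesis by (simp add: add.commute)
  qed
  finally show ?thesis unfolding ftrace_def g_def .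
qed

lemma ftrace_nat: "ftrace_nat (x::'a::{finite,field}) < CHAR('a) \<and> of_nat (ftrace_nat x) = ftrace x"
proof -
  have "\<exists>!k. k < CHAR('a) \<and> of_nat k = ftrace x"
    using frob_fixed[OF ftrace_pow[of x]] of_nat_inj_char[where 'a='a] by auto
  thus ?thesis unfolding ftrace_nat_def by (rule theI')
qed

lemma ftrace_nat_eqI: "k < CHAR('a) \<Longrightarrow> of_nat k = ftrace (x::'a::{finite,field}) \<Longrightarrow> ftrace_nat x = k"
  using ftrace_nat[of x] of_nat_inj_char[where 'a='a] by metis

lemma ftrace_nat_add: "ftrace_nat ((x::'a::{finite,field}) + y) = (ftrace_nat x + ftrace_nat y) mod CHAR('a)"
proof (rule ftrace_nat_eqI)
  show "(ftrace_nat x + ftrace_nat y) mod CHAR('a) < CHAR('a)" using char_gt1[where 'a='a] by simp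
  show "of_nat ((ftrace_nat x + ftrace_nat y) mod CHAR('a)) = ftrace (x + y)"
    using ftrace_nat[of x] ftrace_nat[of y] by (simp add: of_nat_mod_char ftrace_add)
qed

lemma ftrace_nat_0: "ftrace_nat (0::'a::{finite,field}) = 0"
  by (rule ftrace_nat_eqI) (use char_gt1[where 'a='a] in \<open>auto simp: ftrace_0\<close>)

lemma ftrace_nonzero: "\<exists>x::'a::{finite,field}. ftrace x \<noteq> 0"
proof (rule ccontr)
  assume H: "\<not> ?thesis"
  let ?p = "CHAR('a)" and ?n = "field_deg TYPE('a)"
  have p1: "?p > 1" by (rule char_gt1)
  have n0: "?n > 0" by (rule field_deg_pos)
  define T :: "'a poly" where "T = (\<Sum>i<?n. monom 1 (?p ^ i))"
  have pT: "poly T x = ftrace x" for x by (simp add: T_def poly_sum poly_monom ftrace_def)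
  have "coeff T (?p ^ (?n - 1)) = (\<Sum>i<?n. if i = ?n - 1 then 1 else 0)"
    unfolding T_def coeff_sum using p1 by (intro sum.cong) auto
  also have "\<dots> = 1" using n0 by simp
  finally have T0: "T \<noteq> 0" by auto
  have dT: "degree T \<le> ?p ^ (?n - 1)" unfolding T_def
    by (rule degree_sum_le) (use p1 in \<open>auto intro!: order.trans[OF degree_monom_le] power_increasing\<close>)
  have "card {x. poly T x = 0} \<le> ?p ^ (?n - 1)" using card_poly_roots_bound[OF T0] dT by simp
  moreover have "{x. poly T x = 0} = UNIV" using H by (auto simp: pT)
  moreover have "?p ^ (?n - 1) < ?p ^ ?n" using p1 n0 by simp
  ultimately show False using field_deg[where 'a='a] by simp
qed

lemma cis_mod:
  assumes "p > (0::nat)"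
  shows "cis (2 * pi * real (k mod p) / real p) = cis (2 * pi * real k / real p)"
proof -
  have "real k = real p * real (k div p) + real (k mod p)"
  proof -
    have "real k = real (p * (k div p) + k mod p)" by simp
    also have "\<dots> = real p * real (k div p) + real (k mod p)" by (simp only: of_nat_add of_nat_mult)
    finally show ?thesis .
  qed
  hence "2 * pi * real k / real p = 2 * pi * real (k div p) + 2 * pi * real (k mod p) / real p"
    using assms by (simp add: divide_simps) (simp add: algebra_simps)
  hence "cis (2 * pi * real k / real p) = cis (2 * pi * real (k div p)) * cis (2 * pi * real (k mod p) / real p)"
    by (simp only: cis_mult)
  also have "cis (2 * pi * real (k div p)) = 1" by (rule cis_multiple_2pi) simp
  finally show ?thesis by simp
qed

lemma addchar_add: "addchar ((x::'a::{finite,field}) + y) = addchar x * addchar y"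
proof -
  have p0: "CHAR('a) > 0" using char_gt1[where 'a='a] by simp
  show ?thesis
    unfolding addchar_def ftrace_nat_add cis_mod[OF p0] cis_mult
    by (simp add: add_divide_distrib distrib_left)
qed

lemma addchar_0: "addchar (0::'a::{finite,field}) = 1"
  by (simp add: addchar_def ftrace_nat_0)

lemma norm_addchar [simp]: "norm (addchar (x::'a::{finite,field})) = 1"
  by (simp add: addchar_def)

lemma addchar_neg: "addchar (- (x::'a::{finite,field})) = cnj (addchar x)"
proof -
  obtain t where t: "addchar x = cis t" unfolding addchar_def by blast
  have "addchar (-x) * addchar x = 1" by (simp flip: addchar_add add: addchar_0)
  hence "addchar (-x) = inverse (addchar x)" by (simp add: field_simps t)
  thus ?thesis by (simp add: t cis_cnj)
qed

lemma addchar_diff: "addchar ((x::'a::{finite,field}) - y) = addchar x * cnj (addchar y)"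
  using addchar_add[of x "-y"] by (simp add: addchar_neg)

lemma addchar_nontriv: "\<exists>x::'a::{finite,field}. addchar x \<noteq> 1"
proof -
  obtain x :: 'a where x: "ftrace x \<noteq> 0" using ftrace_nonzero by blast
  define k where "k = ftrace_nat x"
  have kp: "k < CHAR('a)" "of_nat k = ftrace x" using ftrace_nat[of x] by (auto simp: k_def)
  have k0: "k > 0" using kp x by (cases k) auto
  have "addchar x \<noteq> 1"
  proof
    assume "addchar x = 1"
    hence "cos (2 * pi * real k / real CHAR('a)) = 1"
      unfolding addchar_def k_def by (metis Re_complex_of_real complex_of_real_def cis.sel(1) one_complex.sel(1))
    then obtain n :: int where n: "2 * pi * real k / real CHAR('a) = real_of_int n * 2 * pi"
      using cos_one_2pi_int by blast
    have pp: "real CHAR('a) > 0" using char_gt1[where 'a='a] by simp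
    hence "real k = real_of_int n * real CHAR('a)" using n by (simp add: field_simps)
    hence kn: "int k = n * int CHAR('a)" by (metis of_int_eq_iff of_int_mult of_int_of_nat_eq)
    show False
    proof (cases "n \<le> 0")
      case True
      hence "n * int CHAR('a) \<le> 0" by (simp add: mult_nonpos_nonneg)
      thus False using kn k0 by linarith
    next
      case False
      hence "n * int CHAR('a) \<ge> 1 * int CHAR('a)" by (intro mult_right_mono) auto
      thus False using kn kp by linarith
    qed
  qed
  thus ?thesis by blast
qed

lemma sum_addchar: "(\<Sum>a\<in>UNIV. addchar (s * (a::'a::{finite,field}))) = (if s = 0 then of_nat CARD('a) else 0)"
proof (cases "s = 0")
  case True thus ?thesis by (simp add: addchar_0)
next
  case False
  have e1: "(\<Sum>a\<in>UNIV. addchar (s * a)) = (\<Sum>a\<in>UNIV. addchar (a::'a))"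
    by (rule sum.reindex_bij_witness[where i="\<lambda>b. b / s" and j="\<lambda>a. s * a"]) (use False in auto)
  obtain x0 :: 'a where x0: "addchar x0 \<noteq> 1" using addchar_nontriv by blast
  have "(\<Sum>a\<in>UNIV. addchar (a::'a)) = (\<Sum>a\<in>UNIV. addchar (a + x0))"
    by (rule sum.reindex_bij_witness[of _ "\<lambda>a. a + x0" "\<lambda>b. b - x0"]) auto
  also have "\<dots> = addchar x0 * (\<Sum>a\<in>UNIV. addchar (a::'a))"
    by (simp add: addchar_add sum_distrib_left mult.commute)
  finally have "(1 - addchar x0) * (\<Sum>a\<in>UNIV. addchar (a::'a)) = 0" by (simp add: algebra_simps)
  hence "(\<Sum>a\<in>UNIV. addchar (a::'a)) = 0" using x0 by simp
  thus ?thesis using False e1 by simp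
qed

lemma char_odd:
  assumes "odd CARD('a::{finite,field})"
  shows "odd CHAR('a)"
proof -
  have "CHAR('a) dvd CARD('a)" using field_deg_pos[where 'a='a]
    by (subst field_deg) (simp add: dvd_power)
  thus ?thesis using assms by (auto elim: dvd_trans[rotated])
qed

lemma char_ge3:
  assumes "odd CARD('a::{finite,field})"
  shows "CHAR('a) \<ge> 3"
proof -
  have "CHAR('a) \<noteq> 2" using char_odd[OF assms] by auto
  thus ?thesis using char_gt1[where 'a='a] by linarith
qed

lemma two_nz:
  assumes "odd CARD('a::{finite,field})"
  shows "(2::'a) \<noteq> 0"
proof
  assume "(2::'a) = 0"
  hence "(of_nat 2 :: 'a) = 0" by simp
  hence "CHAR('a) dvd 2" by (simp only: of_nat_eq_0_iff_char_dvd)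
  thus False using char_ge3[OF assms] by (auto dest: dvd_imp_le)
qed

lemma card_ge3:
  assumes "odd CARD('a::{finite,field})"
  shows "CARD('a) \<ge> 3"
  using card_ge2[where 'a='a] assms by (cases "CARD('a) = 2") auto

lemma qchar_vals: "qchar (a::'a::{finite,field}) \<in> {-1,0,1}"
  by (simp add: qchar_def)

lemma qchar_0 [simp]: "qchar (0::'a::{finite,field}) = 0"
  by (simp add: qchar_def)

lemma qchar_eq_0_iff: "qchar (a::'a::{finite,field}) = 0 \<longleftrightarrow> a = 0"
  by (simp add: qchar_def)

lemma qchar_sq: "t \<noteq> 0 \<Longrightarrow> qchar ((t::'a::{finite,field})^2) = 1"
  by (auto simp: qchar_def)

lemma of_int_inj3:
  assumes "odd CARD('a::{finite,field})" "x \<in> {-1,0,1}" "y \<in> {-1,0,1}"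
    "(of_int x :: 'a) = of_int y"
  shows "x = y"
proof -
  have "[x = y] (mod int CHAR('a))" using assms(4) by (simp add: of_int_eq_iff_cong_CHAR)
  hence d: "int CHAR('a) dvd (x - y)" by (simp add: cong_iff_dvd_diff)
  have "\<bar>x - y\<bar> < int CHAR('a)" using assms(2,3) char_ge3[OF assms(1)] by auto
  moreover have "x - y = 0" if "x - y \<noteq> 0"
  proof -
    have "int CHAR('a) \<le> \<bar>x - y\<bar>" using dvd_imp_le_int[of "x - y" "int CHAR('a)"] d that by simp
    thus ?thesis using \<open>\<bar>x - y\<bar> < _\<close> by simp
  qed
  ultimately show ?thesis by auto
qed

definition "halfq (x::'a itself) = (CARD('a) - 1) div 2"

lemma euler_aux:
  assumes odd: "odd CARD('a::{finite,field})"
  defines "h \<equiv> (CARD('a) - 1) div 2"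
  shows "(\<lambda>b. b^2) ` (UNIV - {0::'a}) = {x::'a. x ^ h = 1}"
    and "card ((\<lambda>b. b^2) ` (UNIV - {0::'a})) = h"
proof -
  let ?q = "CARD('a)"
  let ?Sq = "(\<lambda>b. b^2) ` (UNIV - {0::'a})"
  have q3: "?q \<ge> 3" by (rule card_ge3[OF odd])
  have h2: "2 * h = ?q - 1" using odd unfolding h_def by auto
  have h1: "h \<ge> 1" using q3 h2 by linarith
  define R :: "'a poly" where "R = monom 1 h - 1"
  have pR: "poly R x = x ^ h - 1" for x by (simp add: R_def poly_monom)
  have cR: "coeff R h = 1" using h1 by (simp add: R_def)
  hence R0: "R \<noteq> 0" by auto
  have dR: "degree R \<le> h" unfolding R_def
    by (rule degree_diff_le) (auto intro: degree_monom_le)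
  have rootsR: "{x. poly R x = 0} = {x::'a. x ^ h = 1}" by (simp add: pR)
  have fin: "finite {x::'a. x ^ h = 1}" by simp
  have c1: "card {x::'a. x ^ h = 1} \<le> h" using card_poly_roots_bound[OF R0] dR rootsR by simp
  have sub: "?Sq \<subseteq> {x. x ^ h = 1}"
  proof
    fix x assume "x \<in> ?Sq"
    then obtain b :: 'a where b: "b \<noteq> 0" "x = b^2" by auto
    have "x ^ h = b ^ (2 * h)" by (simp add: b power_mult)
    also have "\<dots> = 1" using h2 power_card_minus1[OF b(1)] by simp
    finally show "x \<in> {x. x ^ h = 1}" by simp
  qed
  have fib: "card {b \<in> UNIV - {0}. b^2 = c} \<le> 2" for c :: 'a
  proof (cases "\<exists>b. b \<noteq> 0 \<and> b^2 = c")
    case True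
    then obtain b where "b^2 = c" by auto
    hence "{b \<in> UNIV - {0}. b^2 = c} \<subseteq> {b, -b}" by (auto simp: power2_eq_iff)
    hence "card {b \<in> UNIV - {0}. b^2 = c} \<le> card {b, -b}" by (intro card_mono) auto
    also have "\<dots> \<le> 2" by (simp add: card_insert_if)
    finally show ?thesis .
  next
    case False
    hence "{b \<in> UNIV - {0}. b^2 = c} = {}" by auto
    thus ?thesis by (simp only: card.empty)
  qed
  have "card (UNIV - {0::'a}) = (\<Sum>c\<in>?Sq. card {b \<in> UNIV - {0}. b^2 = c})"
    using sum.image_gen[of "UNIV - {0::'a}" "\<lambda>_. 1::nat" "\<lambda>b. b^2"] by simp
  also have "\<dots> \<le> (\<Sum>c\<in>?Sq. 2)" by (intro sum_mono fib)
  finally have "?q - 1 \<le> 2 * card ?Sq" by (simp add: card_Diff_singleton mult.commute)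
  hence c2: "h \<le> card ?Sq" using h2 by linarith
  have "card ?Sq \<le> card {x::'a. x ^ h = 1}" by (rule card_mono[OF fin sub])
  hence "card ?Sq = card {x::'a. x ^ h = 1}" using c1 c2 by linarith
  thus "?Sq = {x::'a. x ^ h = 1}" using card_subset_eq[OF fin sub] by simp
  show "card ?Sq = h" using c1 c2 \<open>card ?Sq \<le> _\<close> by linarith
qed

lemma euler:
  assumes odd: "odd CARD('a::{finite,field})"
  shows "(of_int (qchar a) :: 'a) = a ^ ((CARD('a) - 1) div 2)"
proof -
  let ?h = "(CARD('a) - 1) div 2"
  have q3: "CARD('a) \<ge> 3" by (rule card_ge3[OF odd])
  have h2: "2 * ?h = CARD('a) - 1" using odd by auto
  show ?thesis
  proof (cases "a = 0")
    case True thus ?thesis using q3 h2 by (simp add: qchar_def power_0_left)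
  next
    case a0: False
    show ?thesis
    proof (cases "\<exists>b. a = b^2")
      case True
      then obtain b where b: "a = b^2" by auto
      hence "b \<noteq> 0" using a0 by auto
      hence "a ^ ?h = 1" using b power_card_minus1[of b] h2 by (simp add: power_mult[symmetric])
      thus ?thesis using True a0 by (simp add: qchar_def)
    next
      case False
      hence nq: "qchar a = -1" using a0 by (simp add: qchar_def)
      have "a \<notin> (\<lambda>b. b^2) ` (UNIV - {0::'a})" using False by auto
      hence ne1: "a ^ ?h \<noteq> 1" using euler_aux(1)[OF odd] by auto
      have "(a ^ ?h)^2 = 1" using power_card_minus1[OF a0] h2 by (simp add: power_mult[symmetric] mult.commute)
      hence "a ^ ?h = 1 \<or> a ^ ?h = -1" using power2_eq_iff[of "a ^ ?h" 1] by simp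
      thus ?thesis using ne1 nq by simp
    qed
  qed
qed

lemma qchar_mult:
  assumes odd: "odd CARD('a::{finite,field})"
  shows "qchar ((a::'a) * b) = qchar a * qchar b"
proof (rule of_int_inj3[OF odd])
  show "qchar (a * b) \<in> {-1,0,1}" by (rule qchar_vals)
  show "qchar a * qchar b \<in> {-1,0,1}" using qchar_vals[of a] qchar_vals[of b] by auto
  show "(of_int (qchar (a * b)) :: 'a) = of_int (qchar a * qchar b)"
    by (simp add: euler[OF odd] power_mult_distrib)
qed

lemma parity4: "odd (q::nat) \<Longrightarrow> even ((q - 1) div 2) \<longleftrightarrow> q mod 4 = 1"
proof -
  assume "odd q"
  then obtain k where k: "q = 2 * k + 1" by (rule oddE)
  hence "(q - 1) div 2 = k" by simp
  moreover have "q mod 4 = 1 \<longleftrightarrow> even k" unfolding k by presburger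
  ultimately show ?thesis by simp
qed

lemma qchar_minus1:
  assumes odd: "odd CARD('a::{finite,field})"
  shows "qchar (-1::'a) = (if CARD('a) mod 4 = 1 then 1 else -1)"
proof -
  let ?h = "(CARD('a) - 1) div 2"
  have "qchar (-1::'a) = (-1) ^ ?h"
  proof (rule of_int_inj3[OF odd])
    show "qchar (-1::'a) \<in> {-1,0,1}" by (rule qchar_vals)
    show "(-1::int) ^ ?h \<in> {-1,0,1}" by (cases "even ?h") auto
    show "(of_int (qchar (-1::'a)) :: 'a) = of_int ((-1) ^ ?h)"
      by (simp add: euler[OF odd])
  qed
  moreover have "even ?h \<longleftrightarrow> CARD('a) mod 4 = 1"
    using odd by (rule parity4)
  ultimately show ?thesis by auto
qed

lemma qchar_inverse:
  assumes odd: "odd CARD('a::{finite,field})"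
  shows "qchar (inverse (a::'a)) = qchar a"
proof (cases "a = 0")
  case False
  have "qchar a * qchar (inverse a) = qchar (1::'a)" using False by (simp flip: qchar_mult[OF odd])
  also have "qchar (1::'a) = 1" using qchar_sq[of "1::'a"] by simp
  finally show ?thesis using qchar_vals[of a] qchar_vals[of "inverse a"] by auto
qed simp

lemma qchar_sum:
  assumes odd: "odd CARD('a::{finite,field})"
  shows "(\<Sum>a\<in>UNIV. qchar (a::'a)) = 0"
proof -
  let ?Sq = "(\<lambda>b. b^2) ` (UNIV - {0::'a})"
  have "card ?Sq = (CARD('a) - 1) div 2" by (rule euler_aux(2)[OF odd])
  moreover have "(CARD('a) - 1) div 2 < card (UNIV - {0::'a})"
    using card_ge3[OF odd] by (simp add: card_Diff_singleton)
  ultimately have "\<not> (UNIV - {0::'a}) \<subseteq> ?Sq" using card_mono[of ?Sq "UNIV - {0::'a}"] by auto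
  then obtain n :: 'a where n: "n \<noteq> 0" "n \<notin> ?Sq" by blast
  hence qn: "qchar n = -1" unfolding qchar_def by auto
  have "(\<Sum>a\<in>UNIV. qchar (a::'a)) = (\<Sum>a\<in>UNIV. qchar (n * a))"
    by (rule sum.reindex_bij_witness[where i="\<lambda>a. n * a" and j="\<lambda>b. b / n"]) (use n in auto)
  also have "\<dots> = (\<Sum>a\<in>UNIV. qchar n * qchar (a::'a))"
    by (intro sum.cong refl qchar_mult[OF odd])
  also have "\<dots> = - (\<Sum>a\<in>UNIV. qchar (a::'a))"
    by (simp only: qn sum_distrib_left[symmetric])
  finally show ?thesis by simp
qed

lemma card_sqrt:
  assumes odd: "odd CARD('a::{finite,field})"
  shows "card {t::'a. t^2 = a} = nat (1 + qchar a)"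
proof (cases "a = 0")
  case True
  have "{t::'a. t^2 = a} = {0}" using True by auto
  thus ?thesis using True by simp
next
  case a0: False
  show ?thesis
  proof (cases "\<exists>b. a = b^2")
    case True
    then obtain b where b: "a = b^2" by auto
    hence b0: "b \<noteq> 0" using a0 by auto
    have "{t. t^2 = a} = {b, -b}" using b by (auto simp: power2_eq_iff)
    moreover have "b \<noteq> -b"
    proof
      assume bb: "b = -b"
      have "b + b = 0" by (subst (2) bb) simp
      hence "2 * b = 0" by (simp only: mult_2)
      thus False using b0 two_nz[OF odd] by simp
    qed
    ultimately show ?thesis using True a0 by (simp add: qchar_def)
  next
    case False
    hence "{t. t^2 = a} = {}" by auto
    thus ?thesis using False a0 by (simp add: qchar_def)
  qed
qed

definition ceta :: "'a::{finite,field} \<Rightarrow> complex" where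
  "ceta a = complex_of_int (qchar a)"

definition gsum :: "'a::{finite,field} itself \<Rightarrow> complex" where
  "gsum _ = (\<Sum>a\<in>UNIV. ceta (a::'a) * addchar a)"

lemma ceta_0 [simp]: "ceta (0::'a::{finite,field}) = 0"
  by (simp add: ceta_def)

lemma ceta_mult:
  assumes odd: "odd CARD('a::{finite,field})"
  shows "ceta ((a::'a) * b) = ceta a * ceta b"
  by (simp add: ceta_def qchar_mult[OF odd])

lemma ceta_sq_nz: "(s::'a::{finite,field}) \<noteq> 0 \<Longrightarrow> ceta s ^ 2 = 1"
proof -
  assume "s \<noteq> 0"
  hence "qchar s \<in> {-1, 1}" using qchar_vals[of s] qchar_eq_0_iff[of s] by auto
  thus ?thesis by (auto simp: ceta_def)
qed

lemma ceta_1 [simp]: "ceta (1::'a::{finite,field}) = 1"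
  using qchar_sq[of "1::'a"] by (simp add: ceta_def)

lemma ceta_inverse:
  assumes odd: "odd CARD('a::{finite,field})"
  shows "ceta (inverse (a::'a)) = ceta a"
  by (simp add: ceta_def qchar_inverse[OF odd])

lemma sum_ceta:
  assumes odd: "odd CARD('a::{finite,field})"
  shows "(\<Sum>a\<in>UNIV. ceta (a::'a)) = 0"
proof -
  have "(\<Sum>a\<in>UNIV. ceta (a::'a)) = of_int (\<Sum>a\<in>UNIV. qchar (a::'a))"
    by (simp add: ceta_def)
  also have "\<dots> = 0" by (simp add: qchar_sum[OF odd])
  finally show ?thesis .
qed

lemma sum_sq_sub:
  assumes odd: "odd CARD('a::{finite,field})"
  shows "(\<Sum>t\<in>UNIV. g ((t::'a)^2)) = (\<Sum>a\<in>UNIV. (1 + ceta a) * (g a :: complex))"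
proof -
  have "(\<Sum>t\<in>UNIV. g ((t::'a)^2)) = (\<Sum>t\<in>UNIV. \<Sum>a\<in>UNIV. if t^2 = a then g a else 0)"
    by simp
  also have "\<dots> = (\<Sum>a\<in>UNIV. \<Sum>t\<in>UNIV. if t^2 = a then g a else 0)"
    by (rule sum.swap)
  also have "\<dots> = (\<Sum>a\<in>UNIV. of_nat (card {t::'a. t^2 = a}) * g a)"
  proof (intro sum.cong refl)
    fix a :: 'a
    have "(\<Sum>t\<in>UNIV. if t^2 = a then g a else 0) = (\<Sum>t\<in>{t\<in>UNIV. t^2 = a}. g a)"
      using sum.inter_filter[where A=UNIV and P="\<lambda>t::'a. t^2 = a" and g="\<lambda>_. g a"] by simp
    also have "\<dots> = of_nat (card {t::'a. t^2 = a}) * g a" by simp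
    finally show "(\<Sum>t\<in>UNIV. if t^2 = a then g a else 0) = of_nat (card {t::'a. t^2 = a}) * g a" .
  qed
  also have "\<dots> = (\<Sum>a\<in>UNIV. (1 + ceta a) * g a)"
  proof (intro sum.cong refl)
    fix a :: 'a
    have "1 + qchar a \<ge> 0" using qchar_vals[of a] by auto
    hence "(of_nat (nat (1 + qchar a)) :: complex) = of_int (1 + qchar a)"
      by (metis of_int_of_nat_eq int_nat_eq of_int_of_nat_eq)
    thus "of_nat (card {t::'a. t^2 = a}) * g a = (1 + ceta a) * g a"
      by (simp add: card_sqrt[OF odd] ceta_def)
  qed
  finally show ?thesis .
qed

lemma twisted:
  assumes odd: "odd CARD('a::{finite,field})" and a: "(a::'a) \<noteq> 0"
  shows "(\<Sum>s\<in>UNIV. ceta s * addchar (a * s)) = ceta a * gsum TYPE('a)"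
proof -
  have "(\<Sum>s\<in>UNIV. ceta s * addchar (a * s)) = (\<Sum>b\<in>UNIV. ceta (b / a) * addchar b)"
    by (rule sum.reindex_bij_witness[where i="\<lambda>b. b / a" and j="\<lambda>s. a * s"]) (use a in auto)
  also have "\<dots> = (\<Sum>b\<in>UNIV. ceta a * (ceta b * addchar (b::'a)))"
    by (intro sum.cong refl)
       (simp add: divide_inverse ceta_mult[OF odd] ceta_inverse[OF odd] mult_ac)
  also have "\<dots> = ceta a * gsum TYPE('a)"
    by (simp add: gsum_def sum_distrib_left)
  finally show ?thesis .
qed

lemma gauss_quad:
  assumes odd: "odd CARD('a::{finite,field})" and s: "(s::'a) \<noteq> 0"
  shows "(\<Sum>t\<in>UNIV. addchar (s * t^2)) = ceta s * gsum TYPE('a)"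
proof -
  have "(\<Sum>t\<in>UNIV. addchar (s * t^2)) = (\<Sum>a\<in>UNIV. (1 + ceta a) * addchar (s * a))"
    by (rule sum_sq_sub[OF odd])
  also have "\<dots> = (\<Sum>a\<in>UNIV. addchar (s * a)) + (\<Sum>a\<in>UNIV. ceta a * addchar (s * a))"
    by (simp add: distrib_right sum.distrib)
  also have "(\<Sum>a\<in>UNIV. addchar (s * a)) = 0" using s by (simp add: sum_addchar)
  also have "(\<Sum>a\<in>UNIV. ceta a * addchar (s * a)) = ceta s * gsum TYPE('a)"
    by (rule twisted[OF odd s])
  finally show ?thesis by simp
qed

lemma eta_expand:
  assumes odd: "odd CARD('a::{finite,field})"
  shows "gsum TYPE('a) * ceta (a::'a) = (\<Sum>s\<in>UNIV. ceta s * addchar (a * s))"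
proof (cases "a = 0")
  case True thus ?thesis by (simp add: addchar_0 sum_ceta[OF odd])
next
  case False show ?thesis by (subst twisted[OF odd False]) (rule mult.commute)
qed

lemma gsum_norm:
  assumes odd: "odd CARD('a::{finite,field})"
  shows "gsum TYPE('a) * cnj (gsum TYPE('a)) = of_nat CARD('a)"
proof -
  let ?G = "gsum TYPE('a)"
  have "cnj ?G = (\<Sum>b\<in>UNIV. ceta (b::'a) * cnj (addchar b))"
    by (simp add: gsum_def ceta_def)
  hence "?G * cnj ?G = (\<Sum>b\<in>UNIV. cnj (addchar b) * (?G * ceta (b::'a)))"
    by (simp add: sum_distrib_left mult_ac)
  also have "\<dots> = (\<Sum>b\<in>UNIV. cnj (addchar b) * (\<Sum>s\<in>UNIV. ceta s * addchar (b * (s::'a))))"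
    by (simp only: eta_expand[OF odd])
  also have "\<dots> = (\<Sum>b\<in>UNIV. \<Sum>s\<in>UNIV. ceta s * (addchar (b * s) * cnj (addchar (b::'a))))"
    by (simp add: sum_distrib_left mult_ac)
  also have "\<dots> = (\<Sum>s\<in>UNIV. \<Sum>b\<in>UNIV. ceta s * (addchar (b * s) * cnj (addchar (b::'a))))"
    by (rule sum.swap)
  also have "\<dots> = (\<Sum>s\<in>UNIV. ceta s * (\<Sum>b\<in>UNIV. addchar ((s - 1) * (b::'a))))"
  proof (intro sum.cong refl)
    fix s :: 'a
    have "addchar (b * s) * cnj (addchar b) = addchar ((s - 1) * b)" for b :: 'a
    proof -
      have "addchar (b * s) * cnj (addchar b) = addchar (b * s - b)" by (rule addchar_diff[symmetric])
      also have "b * s - b = (s - 1) * b" by (simp add: algebra_simps)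
      finally show ?thesis .
    qed
    thus "(\<Sum>b\<in>UNIV. ceta s * (addchar (b * s) * cnj (addchar b))) = ceta s * (\<Sum>b\<in>UNIV. addchar ((s - 1) * b))"
      by (simp add: sum_distrib_left)
  qed
  also have "\<dots> = (\<Sum>s\<in>UNIV. if (s::'a) = 1 then of_nat CARD('a) else 0)"
    by (intro sum.cong refl) (simp add: sum_addchar)
  also have "\<dots> = of_nat CARD('a)" by simp
  finally show ?thesis .
qed

lemma gsum_sq:
  assumes odd: "odd CARD('a::{finite,field})"
  shows "gsum TYPE('a) ^ 2 = ceta (-1::'a) * of_nat CARD('a)"
proof -
  let ?G = "gsum TYPE('a)"
  have "cnj ?G = (\<Sum>b\<in>UNIV. ceta (b::'a) * addchar (-b))"
    by (simp add: gsum_def ceta_def addchar_neg)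
  also have "\<dots> = (\<Sum>b\<in>UNIV. ceta (-b::'a) * addchar b)"
    by (rule sum.reindex_bij_witness[where i="\<lambda>b. -b" and j="\<lambda>b. -b"]) auto
  also have "\<dots> = (\<Sum>b\<in>UNIV. ceta (-1::'a) * (ceta b * addchar (b::'a)))"
  proof (intro sum.cong refl)
    fix b :: 'a
    have "ceta (-b) = ceta ((-1::'a) * b)" by simp
    also have "\<dots> = ceta (-1::'a) * ceta b" by (rule ceta_mult[OF odd])
    finally show "ceta (-b) * addchar b = ceta (-1::'a) * (ceta b * addchar b)" by simp
  qed
  also have "\<dots> = ceta (-1::'a) * ?G"
    by (simp only: gsum_def sum_distrib_left)
  finally have c: "cnj ?G = ceta (-1::'a) * ?G" .
  have e2: "ceta (-1::'a) ^ 2 = 1" by (rule ceta_sq_nz) simp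
  have "of_nat CARD('a) = ?G * (ceta (-1::'a) * ?G)" using gsum_norm[OF odd] c by simp
  hence "ceta (-1::'a) * of_nat CARD('a) = ceta (-1::'a) ^ 2 * ?G ^ 2"
    by (simp add: power2_eq_square mult_ac)
  thus ?thesis using e2 by simp
qed

lemma gsum_nz:
  assumes odd: "odd CARD('a::{finite,field})"
  shows "gsum TYPE('a) \<noteq> 0"
  using gsum_norm[OF odd] by auto

lemma addchar_sum: "addchar (sum f I) = (\<Prod>i\<in>I. addchar (f i :: 'a::{finite,field}))"
  by (induction I rule: infinite_finite_induct) (simp_all add: addchar_0 addchar_add)

lemma sum_vec_prod:
  "(\<Sum>x\<in>UNIV. \<Prod>i\<in>UNIV. f i ((x::'a::finite^'n)$i)) = (\<Prod>i\<in>UNIV. \<Sum>a\<in>UNIV. (f i a :: complex))"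
proof -
  have "(\<Prod>i\<in>UNIV. \<Sum>a\<in>UNIV. f i a) = (\<Sum>g\<in>PiE UNIV (\<lambda>_. UNIV). \<Prod>i\<in>UNIV. f i (g i))"
    by (rule prod_sum_PiE) auto
  also have "\<dots> = (\<Sum>g\<in>UNIV. \<Prod>i\<in>UNIV. f i (g i))" by simp
  also have "\<dots> = (\<Sum>x\<in>UNIV. \<Prod>i\<in>UNIV. f i ((x::'a^'n)$i))"
    by (rule sum.reindex_bij_witness[where i="vec_nth" and j="vec_lambda"]) (auto simp: fun_eq_iff)
  finally show ?thesis ..
qed

lemma dotp_comm: "dotp m x = dotp x m"
  by (simp add: dotp_def mult.commute)

lemma dotp_comm_diff: "dotp m (x - y) = dotp (x - y) m"
  by (rule dotp_comm)

lemma dotp_diff: "dotp m (x - y) = dotp m x - dotp m y"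
  by (simp add: dotp_def algebra_simps sum_subtractf)

lemma addchar_dotp: "addchar (dotp m (x::'a::{finite,field}^'n)) = (\<Prod>i\<in>UNIV. addchar (m$i * x$i))"
  by (simp add: dotp_def addchar_sum)

lemma orth_vec:
  "(\<Sum>x\<in>UNIV. addchar (dotp m (x::'a::{finite,field}^'n))) =
     (if m = 0 then of_nat CARD('a) ^ CARD('n) else 0)"
proof -
  have "(\<Sum>x\<in>UNIV. addchar (dotp m (x::'a^'n))) = (\<Prod>i\<in>UNIV. \<Sum>a\<in>UNIV. addchar (m$i * a))"
    by (simp only: addchar_dotp) (rule sum_vec_prod)
  also have "\<dots> = (\<Prod>i\<in>UNIV. if m$i = 0 then of_nat CARD('a) else 0)"
    by (simp add: sum_addchar)
  also have "\<dots> = (if m = 0 then of_nat CARD('a) ^ CARD('n) else 0)"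
  proof (cases "m = 0")
    case True thus ?thesis by simp
  next
    case False
    then obtain i where "m$i \<noteq> 0" by (auto simp: vec_eq_iff)
    thus ?thesis using False by (auto simp: prod_zero_iff)
  qed
  finally show ?thesis .
qed

lemma inversion:
  fixes f :: "'a::{finite,field}^'n \<Rightarrow> complex"
  shows "(\<Sum>m\<in>UNIV. (\<Sum>w\<in>UNIV. f w * addchar (- dotp m w)) * addchar (dotp m z)) =
           of_nat CARD('a) ^ CARD('n) * f z"
proof -
  have "(\<Sum>m\<in>UNIV. (\<Sum>w\<in>UNIV. f w * addchar (- dotp m w)) * addchar (dotp m z)) =
        (\<Sum>m\<in>UNIV. \<Sum>w\<in>UNIV. f w * addchar (dotp (z - w) m))"
  proof (intro sum.cong refl)
    fix m :: "'a^'n"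
    have "\<And>w. addchar (- dotp m w) * addchar (dotp m z) = addchar (dotp (z - w) m)"
      by (simp flip: addchar_add add: dotp_comm[of _ m] dotp_diff)
    thus "(\<Sum>w\<in>UNIV. f w * addchar (- dotp m w)) * addchar (dotp m z) =
          (\<Sum>w\<in>UNIV. f w * addchar (dotp (z - w) m))"
      by (simp add: sum_distrib_right mult.assoc)
  qed
  also have "\<dots> = (\<Sum>w\<in>UNIV. f w * (\<Sum>m\<in>UNIV. addchar (dotp (z - w) m)))"
    by (subst sum.swap) (simp add: sum_distrib_left)
  also have "\<dots> = (\<Sum>w\<in>UNIV. if w = z then of_nat CARD('a) ^ CARD('n) * f z else 0)"
    by (intro sum.cong refl) (simp add: orth_vec)
  also have "\<dots> = of_nat CARD('a) ^ CARD('n) * f z" by simp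
  finally show ?thesis .
qed

definition Ssum :: "('a::{finite,field}^'n) set \<Rightarrow> 'a^'n \<Rightarrow> complex" where
  "Ssum A m = (\<Sum>x\<in>A. addchar (dotp m x))"

lemma pair_expand:
  fixes A :: "('a::{finite,field}^'n) set"
  shows "(\<Sum>x\<in>A. \<Sum>y\<in>A. addchar (dotp m (x - y))) = Ssum A m * cnj (Ssum A m)"
  unfolding Ssum_def cnj_sum sum_product by (intro sum.cong refl) (simp add: dotp_diff addchar_diff)

lemma parseval:
  fixes A :: "('a::{finite,field}^'n) set"
  shows "(\<Sum>m\<in>UNIV. Ssum A m * cnj (Ssum A m)) = of_nat CARD('a) ^ CARD('n) * of_nat (card A)"
proof -
  have "(\<Sum>m\<in>UNIV. Ssum A m * cnj (Ssum A m)) = (\<Sum>m\<in>UNIV. \<Sum>x\<in>A. \<Sum>y\<in>A. addchar (dotp (x - y) m))"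
    by (intro sum.cong refl) (simp only: pair_expand[symmetric] dotp_comm_diff)
  also have "\<dots> = (\<Sum>x\<in>A. \<Sum>m\<in>UNIV. \<Sum>y\<in>A. addchar (dotp (x - y) m))"
    by (rule sum.swap)
  also have "\<dots> = (\<Sum>x\<in>A. \<Sum>y\<in>A. \<Sum>m\<in>UNIV. addchar (dotp (x - y) m))"
    by (intro sum.cong refl sum.swap)
  also have "\<dots> = (\<Sum>x\<in>A. \<Sum>y\<in>A. if y = x then of_nat CARD('a) ^ CARD('n) else 0)"
    by (intro sum.cong refl) (simp add: orth_vec)
  also have "\<dots> = (\<Sum>x\<in>A. of_nat CARD('a) ^ CARD('n))"
    by (intro sum.cong refl) (simp add: sum.delta)
  also have "\<dots> = of_nat CARD('a) ^ CARD('n) * of_nat (card A)" by (simp add: mult.commute)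
  finally show ?thesis .
qed

lemma fourier_Ssum:
  "fourier A m = cnj (Ssum A m) / of_nat CARD('a) ^ CARD('n)"
  for A :: "('a::{finite,field}^'n) set"
  by (simp add: fourier_def Ssum_def addchar_neg)

lemma norm_fourier_sq:
  fixes A :: "('a::{finite,field}^'n) set"
  shows "complex_of_real ((cmod (fourier A m))^2) =
           Ssum A m * cnj (Ssum A m) / (of_nat CARD('a) ^ CARD('n))^2"
proof -
  have "complex_of_real ((cmod (fourier A m))^2) = fourier A m * cnj (fourier A m)"
    by (rule complex_norm_square)
  thus ?thesis by (simp add: fourier_Ssum power2_eq_square)
qed

lemma four_nz:
  assumes odd: "odd CARD('a::{finite,field})"
  shows "(4::'a) \<noteq> 0"
proof -
  have "(4::'a) = 2 * 2" by simp
  thus ?thesis using two_nz[OF odd] by (metis mult_eq_0_iff)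
qed

lemma complete_square:
  assumes odd: "odd CARD('a::{finite,field})" and s: "(s::'a) \<noteq> 0"
  shows "(\<Sum>t\<in>UNIV. addchar (s * t^2 - mu * t)) = addchar (- (mu^2) / (4 * s)) * (\<Sum>t\<in>UNIV. addchar (s * t^2))"
proof -
  define c where "c = mu / (2 * s)"
  have two: "(2::'a) \<noteq> 0" by (rule two_nz[OF odd])
  have alg: "s * (u + c)^2 - mu * (u + c) = s * u^2 + (- (mu^2) / (4 * s))" for u
  proof -
    have "2 * s * c = mu" using two s by (simp add: c_def)
    hence "s * (u + c)^2 - mu * (u + c) = s * u^2 - s * c^2"
      by (simp add: power2_eq_square algebra_simps)
    also have "s * c^2 = mu^2 / (4 * s)" using two s four_nz[OF odd]
      by (simp add: c_def power2_eq_square field_simps)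
    finally show ?thesis by simp
  qed
  have "(\<Sum>t\<in>UNIV. addchar (s * t^2 - mu * t)) = (\<Sum>u\<in>UNIV. addchar (s * (u + c)^2 - mu * (u + c)))"
    by (rule sum.reindex_bij_witness[where i="\<lambda>u. u + c" and j="\<lambda>t. t - c"]) auto
  also have "\<dots> = (\<Sum>u\<in>UNIV. addchar (- (mu^2) / (4 * s)) * addchar (s * u^2))"
    by (intro sum.cong refl) (simp only: alg addchar_add mult.commute)
  also have "\<dots> = addchar (- (mu^2) / (4 * s)) * (\<Sum>t\<in>UNIV. addchar (s * t^2))"
    by (simp add: sum_distrib_left)
  finally show ?thesis .
qed

definition Kern :: "'a::{finite,field} \<Rightarrow> 'a^'n \<Rightarrow> complex" where
  "Kern s m = addchar (- sqnorm m / (4 * s)) * (ceta s * gsum TYPE('a)) ^ CARD('n)"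

lemma kernel:
  assumes odd: "odd CARD('a::{finite,field})" and s: "(s::'a) \<noteq> 0"
  shows "(\<Sum>w\<in>UNIV. addchar (s * sqnorm w - dotp m (w::'a^'n))) = Kern s m"
proof -
  have e: "s * sqnorm w - dotp m w = (\<Sum>i\<in>UNIV. s * (w$i)^2 - m$i * w$i)" for w :: "'a^'n"
    by (simp add: sqnorm_def dotp_def sum_distrib_left sum_subtractf)
  have "(\<Sum>w\<in>UNIV. addchar (s * sqnorm w - dotp m (w::'a^'n))) =
        (\<Sum>w\<in>UNIV. \<Prod>i\<in>UNIV. addchar (s * (w$i)^2 - m$i * w$i))"
    by (simp only: e addchar_sum)
  also have "\<dots> = (\<Prod>i\<in>UNIV. \<Sum>t\<in>UNIV. addchar (s * t^2 - m$i * t))"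
    by (rule sum_vec_prod)
  also have "\<dots> = (\<Prod>i\<in>UNIV. addchar (- ((m$i)^2) / (4 * s)) * (ceta s * gsum TYPE('a)))"
    by (intro prod.cong refl) (simp only: complete_square[OF odd s] gauss_quad[OF odd s])
  also have "\<dots> = (\<Prod>i\<in>UNIV. addchar (- ((m$i)^2) / (4 * s))) * (ceta s * gsum TYPE('a)) ^ CARD('n)"
    by (simp add: prod.distrib)
  also have "(\<Prod>i\<in>UNIV. addchar (- ((m$i)^2) / (4 * s))) = addchar (- sqnorm m / (4 * s))"
    by (simp add: addchar_sum[symmetric] sqnorm_def sum_negf sum_divide_distrib)
  finally show ?thesis by (simp add: Kern_def)
qed

lemma kernel_pair:
  fixes A :: "('a::{finite,field}^'n) set"
  assumes odd: "odd CARD('a)" and s: "(s::'a) \<noteq> 0"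
  shows "of_nat CARD('a) ^ CARD('n) * (\<Sum>x\<in>A. \<Sum>y\<in>A. addchar (s * sqnorm (x - y))) =
         (\<Sum>m\<in>UNIV. Kern s m * (Ssum A m * cnj (Ssum A m)))"
proof -
  have inv: "of_nat CARD('a) ^ CARD('n) * addchar (s * sqnorm z) =
             (\<Sum>m\<in>UNIV. Kern s m * addchar (dotp m z))" for z :: "'a^'n"
  proof -
    have "(\<Sum>m\<in>UNIV. (\<Sum>w\<in>UNIV. addchar (s * sqnorm w) * addchar (- dotp m w)) * addchar (dotp m z)) =
          of_nat CARD('a) ^ CARD('n) * addchar (s * sqnorm z)"
      by (rule inversion)
    moreover have "(\<Sum>w\<in>UNIV. addchar (s * sqnorm w) * addchar (- dotp m w)) = Kern s m" for m :: "'a^'n"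
    proof -
      have "(\<Sum>w\<in>UNIV. addchar (s * sqnorm w) * addchar (- dotp m w)) =
            (\<Sum>w\<in>UNIV. addchar (s * sqnorm w - dotp m (w::'a^'n)))"
        by (simp only: addchar_add[symmetric] diff_conv_add_uminus)
      thus ?thesis using kernel[OF odd s] by simp
    qed
    ultimately show ?thesis by simp
  qed
  have "of_nat CARD('a) ^ CARD('n) * (\<Sum>x\<in>A. \<Sum>y\<in>A. addchar (s * sqnorm (x - y))) =
        (\<Sum>x\<in>A. \<Sum>y\<in>A. \<Sum>m\<in>UNIV. Kern s m * addchar (dotp m (x - y)))"
    by (simp only: sum_distrib_left inv)
  also have "\<dots> = (\<Sum>m\<in>UNIV. \<Sum>x\<in>A. \<Sum>y\<in>A. Kern s m * addchar (dotp m (x - y)))"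
  proof -
    have "(\<Sum>x\<in>A. \<Sum>y\<in>A. \<Sum>m\<in>UNIV. Kern s m * addchar (dotp m (x - y))) =
          (\<Sum>x\<in>A. \<Sum>m\<in>UNIV. \<Sum>y\<in>A. Kern s m * addchar (dotp m (x - y)))"
      by (intro sum.cong refl sum.swap)
    also have "\<dots> = (\<Sum>m\<in>UNIV. \<Sum>x\<in>A. \<Sum>y\<in>A. Kern s m * addchar (dotp m (x - y)))"
      by (rule sum.swap)
    finally show ?thesis .
  qed
  also have "\<dots> = (\<Sum>m\<in>UNIV. Kern s m * (Ssum A m * cnj (Ssum A m)))"
    by (intro sum.cong refl) (simp only: pair_expand[symmetric] sum_distrib_left)
  finally show ?thesis .
qed

lemma gen_eq: "(S::complex) = a + X \<Longrightarrow> S = F \<Longrightarrow> a = 1 \<Longrightarrow> X = F - 1" by simp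

lemma inner_s:
  assumes odd: "odd CARD('a::{finite,field})" and oddn: "odd (d::nat)"
  shows "(\<Sum>s\<in>UNIV. ceta s ^ (d + 1) * addchar (- c / (4 * (s::'a)))) =
           (if c = 0 then of_nat CARD('a) else 0) - 1"
proof -
  have cs: "ceta s ^ (d + 1) = (if s = 0 then 0 else 1)" for s :: 'a
  proof (cases "s = 0")
    case False
    obtain k where k: "d + 1 = 2 * k" using oddn by (metis odd_even_add odd_one evenE)
    have "ceta s ^ (d + 1) = (ceta s ^ 2) ^ k" by (simp only: k power_mult)
    thus ?thesis using False ceta_sq_nz[OF False] by simp
  qed simp
  have "(\<Sum>s\<in>UNIV. addchar (- c / (4 * (s::'a)))) = (\<Sum>s\<in>UNIV. addchar ((- c / 4) * inverse (s::'a)))"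
    by (intro sum.cong refl) (simp add: field_simps)
  also have "\<dots> = (\<Sum>u\<in>UNIV. addchar ((- c / 4) * (u::'a)))"
    by (rule sum.reindex_bij_witness[where i="inverse" and j="inverse"]) auto
  also have "\<dots> = (if c = 0 then of_nat CARD('a) else 0)"
    by (subst sum_addchar) (use four_nz[OF odd] in simp)
  finally have full: "(\<Sum>s\<in>UNIV. addchar (- c / (4 * (s::'a)))) = (if c = 0 then of_nat CARD('a) else 0)" .
  have "(\<Sum>s\<in>UNIV. addchar (- c / (4 * (s::'a)))) = addchar (- c / (4 * 0)) + (\<Sum>s\<in>UNIV - {0}. addchar (- c / (4 * (s::'a))))"
    by (rule sum.remove) auto
  hence r1: "(\<Sum>s\<in>UNIV - {0}. addchar (- c / (4 * (s::'a)))) = (if c = 0 then of_nat CARD('a) else 0) - 1"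
    using full by (rule gen_eq) (simp add: addchar_0)
  have "(\<Sum>s\<in>UNIV. ceta s ^ (d + 1) * addchar (- c / (4 * (s::'a)))) =
        ceta (0::'a) ^ (d + 1) * addchar (- c / (4 * 0)) + (\<Sum>s\<in>UNIV - {0}. ceta s ^ (d + 1) * addchar (- c / (4 * (s::'a))))"
    by (rule sum.remove) auto
  also have "\<dots> = (\<Sum>s\<in>UNIV - {0}. addchar (- c / (4 * (s::'a))))"
  proof -
    have "ceta (0::'a) ^ (d + 1) = 0" by simp
    moreover have "(\<Sum>s\<in>UNIV - {0}. ceta s ^ (d + 1) * addchar (- c / (4 * (s::'a)))) =
                   (\<Sum>s\<in>UNIV - {0}. addchar (- c / (4 * (s::'a))))"
      by (intro sum.cong refl, subst cs, simp)
    ultimately show ?thesis by simp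
  qed
  finally show ?thesis using r1 by simp
qed

lemma main_complex:
  fixes A :: "('a::{finite,field}^'n) set"
  assumes odd: "odd CARD('a)" and oddn: "odd CARD('n)"
  shows "(\<Sum>x\<in>A. \<Sum>y\<in>A. ceta (sqnorm (x - y))) =
         gsum TYPE('a) ^ (CARD('n) - 1) *
           (of_nat CARD('a) * of_nat CARD('a) ^ CARD('n) * of_real (Omega0 A) - of_nat (card A))"
proof -
  let ?G = "gsum TYPE('a)" and ?Q = "of_nat CARD('a) ^ CARD('n) :: complex" and ?d = "CARD('n)"
    and ?q = "of_nat CARD('a) :: complex"
  let ?P = "\<lambda>m. Ssum A m * cnj (Ssum A m)"
  let ?T = "\<Sum>x\<in>A. \<Sum>y\<in>A. ceta (sqnorm (x - y))"
  have Q0: "?Q \<noteq> 0" by simp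
  have G0: "?G \<noteq> 0" by (rule gsum_nz[OF odd])
  have d1: "?d \<ge> 1" by (simp add: Suc_leI)
  have GT: "?G * ?T = (\<Sum>s\<in>UNIV. ceta s * (\<Sum>x\<in>A. \<Sum>y\<in>A. addchar (s * sqnorm (x - y))))"
  proof -
    have "?G * ?T = (\<Sum>x\<in>A. \<Sum>y\<in>A. \<Sum>s\<in>UNIV. ceta s * addchar (sqnorm (x - y) * s))"
      by (simp only: sum_distrib_left eta_expand[OF odd])
    also have "\<dots> = (\<Sum>x\<in>A. \<Sum>s\<in>UNIV. \<Sum>y\<in>A. ceta s * addchar (sqnorm (x - y) * s))"
      by (intro sum.cong refl sum.swap)
    also have "\<dots> = (\<Sum>s\<in>UNIV. \<Sum>x\<in>A. \<Sum>y\<in>A. ceta s * addchar (sqnorm (x - y) * s))"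
      by (rule sum.swap)
    also have "\<dots> = (\<Sum>s\<in>UNIV. \<Sum>x\<in>A. \<Sum>y\<in>A. ceta s * addchar (s * sqnorm (x - y)))"
      by (intro sum.cong refl) (simp add: mult.commute)
    also have "\<dots> = (\<Sum>s\<in>UNIV. ceta s * (\<Sum>x\<in>A. \<Sum>y\<in>A. addchar (s * sqnorm (x - y))))"
      by (simp only: sum_distrib_left)
    finally show ?thesis .
  qed
  have "?Q * (?G * ?T) = ?Q * (\<Sum>s\<in>UNIV. ceta s * (\<Sum>x\<in>A. \<Sum>y\<in>A. addchar (s * sqnorm (x - y))))"
    by (simp only: GT)
  also have "\<dots> = (\<Sum>s\<in>UNIV. ?Q * (ceta s * (\<Sum>x\<in>A. \<Sum>y\<in>A. addchar (s * sqnorm (x - y)))))"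
    by (rule sum_distrib_left)
  also have "\<dots> = (\<Sum>s\<in>UNIV. ceta s * (\<Sum>m\<in>UNIV. Kern s m * ?P m))"
  proof (intro sum.cong refl)
    fix s :: 'a
    show "?Q * (ceta s * (\<Sum>x\<in>A. \<Sum>y\<in>A. addchar (s * sqnorm (x - y)))) =
          ceta s * (\<Sum>m\<in>UNIV. Kern s m * ?P m)"
    proof (cases "s = 0")
      case True thus ?thesis by simp
    next
      case False
      have "?Q * (ceta s * (\<Sum>x\<in>A. \<Sum>y\<in>A. addchar (s * sqnorm (x - y)))) =
            ceta s * (?Q * (\<Sum>x\<in>A. \<Sum>y\<in>A. addchar (s * sqnorm (x - y))))" by (simp only: mult.left_commute)
      also have "\<dots> = ceta s * (\<Sum>m\<in>UNIV. Kern s m * ?P m)"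
        by (simp only: kernel_pair[OF odd False])
      finally show ?thesis .
    qed
  qed
  also have "\<dots> = (\<Sum>s\<in>UNIV. \<Sum>m\<in>UNIV. ?P m * ?G ^ ?d * (ceta s ^ (?d + 1) * addchar (- sqnorm m / (4 * s))))"
    by (intro sum.cong refl) (simp add: sum_distrib_left Kern_def power_mult_distrib mult_ac)
  also have "\<dots> = (\<Sum>m\<in>UNIV. ?P m * ?G ^ ?d * (\<Sum>s\<in>UNIV. ceta s ^ (?d + 1) * addchar (- sqnorm m / (4 * (s::'a)))))"
    by (subst sum.swap) (simp only: sum_distrib_left)
  also have "\<dots> = (\<Sum>m\<in>UNIV. ?P m * ?G ^ ?d * ((if sqnorm m = 0 then ?q else 0) - 1))"
    by (intro sum.cong refl) (simp only: inner_s[OF odd oddn])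
  also have "\<dots> = (\<Sum>m\<in>UNIV. ?G ^ ?d * (?q * (if sqnorm m = 0 then ?P m else 0) - ?P m))"
    by (intro sum.cong refl) (simp add: algebra_simps)
  also have "\<dots> = ?G ^ ?d * (?q * (\<Sum>m\<in>UNIV. if sqnorm m = 0 then ?P m else 0) - (\<Sum>m\<in>UNIV. ?P m))"
    by (simp only: sum_distrib_left right_diff_distrib sum_subtractf)
  also have "(\<Sum>m\<in>UNIV. if sqnorm m = 0 then ?P m else 0) = (\<Sum>m\<in>{m. sqnorm m = 0}. ?P m)"
    using sum.inter_filter[where A=UNIV and P="\<lambda>m. sqnorm m = 0" and g="?P"] by simp
  also have "\<dots> = ?Q^2 * of_real (Omega0 A)"
  proof -
    have "of_real (Omega0 A) = (\<Sum>m\<in>{m. sqnorm m = 0}. ?P m / ?Q^2)"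
      unfolding Omega0_def of_real_sum by (intro sum.cong refl) (rule norm_fourier_sq)
    also have "\<dots> = (\<Sum>m\<in>{m. sqnorm m = 0}. ?P m) / ?Q^2" by (rule sum_divide_distrib[symmetric])
    finally have "of_real (Omega0 A) = (\<Sum>m\<in>{m. sqnorm m = 0}. ?P m) / ?Q^2" .
    thus ?thesis using Q0 by simp
  qed
  also have "(\<Sum>m\<in>UNIV. ?P m) = ?Q * of_nat (card A)" by (rule parseval)
  finally have "?Q * (?G * ?T) = ?Q * (?G ^ ?d * (?q * ?Q * of_real (Omega0 A) - of_nat (card A)))"
    by (simp add: power2_eq_square algebra_simps)
  hence "?G * ?T = ?G * (?G ^ (?d - 1) * (?q * ?Q * of_real (Omega0 A) - of_nat (card A)))"
    using Q0 d1 by (simp add: power_eq_if)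
  thus ?thesis using G0 by simp
qed

lemma sqzr:
  fixes A :: "('a::{finite,field}^'n) set"
  shows "real (SQ A) + real (ZR A) / 2 =
           (real (card A)^2 + (\<Sum>x\<in>A. \<Sum>y\<in>A. real_of_int (qchar (sqnorm (x - y))))) / 2"
proof -
  let ?B = "A \<times> A" and ?f = "\<lambda>p. qchar (sqnorm (fst p - snd p))"
  have sq: "SQ A = card {p\<in>?B. ?f p = 1}" unfolding SQ_def by (rule arg_cong[where f=card]) auto
  have zr: "ZR A = card {p\<in>?B. ?f p = 0}" unfolding ZR_def by (rule arg_cong[where f=card]) auto
  have cnt: "real (card {p\<in>?B. P p}) = (\<Sum>p\<in>?B. if P p then 1 else 0)" for P
    using sum.inter_filter[where A="?B" and P=P and g="\<lambda>_. 1::real"] by simp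
  have T: "(\<Sum>x\<in>A. \<Sum>y\<in>A. real_of_int (qchar (sqnorm (x - y)))) = (\<Sum>p\<in>?B. real_of_int (?f p))"
    by (simp add: sum.cartesian_product case_prod_beta)
  have pt: "1 + real_of_int (?f p) = 2 * (if ?f p = 1 then 1 else 0) + (if ?f p = 0 then 1 else 0)" for p
    using qchar_vals[of "sqnorm (fst p - snd p)"] by auto
  have "real (card A)^2 + (\<Sum>p\<in>?B. real_of_int (?f p)) = (\<Sum>p\<in>?B. 1 + real_of_int (?f p))"
    by (simp add: sum.distrib card_cartesian_product power2_eq_square)
  also have "\<dots> = (\<Sum>p\<in>?B. 2 * (if ?f p = 1 then 1 else 0) + (if ?f p = 0 then 1 else 0))"
    by (intro sum.cong refl pt)
  also have "\<dots> = 2 * real (SQ A) + real (ZR A)"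
    by (simp only: sum.distrib sum_distrib_left[symmetric] sq zr cnt)
  finally show ?thesis using T by simp
qed

theorem proposition3p2:
  fixes A :: "('a::{finite,field}^'n) set"
  assumes "odd CARD('a)" and "odd CARD('n)"
  shows "(CARD('n) mod 4 = 3 \<and> CARD('a) mod 4 = 3 \<longrightarrow>
            real (SQ A) + real (ZR A) / 2 =
              real (card A)^2 / 2
              - real CARD('a) ^ ((3 * CARD('n) + 1) div 2) / 2 * Omega0 A
              + real CARD('a) ^ ((CARD('n) - 1) div 2) * real (card A) / 2)
       \<and> (CARD('n) mod 4 = 1 \<or> (CARD('n) mod 4 = 3 \<and> CARD('a) mod 4 = 1) \<longrightarrow>
            real (SQ A) + real (ZR A) / 2 =
              real (card A)^2 / 2
              + real CARD('a) ^ ((3 * CARD('n) + 1) div 2) / 2 * Omega0 A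
              - real CARD('a) ^ ((CARD('n) - 1) div 2) * real (card A) / 2)"
proof -
  let ?q = "real CARD('a)" and ?d = "CARD('n)" and ?k = "(CARD('n) - 1) div 2"
    and ?M = "(3 * CARD('n) + 1) div 2"
  define T where "T = (\<Sum>x\<in>A. \<Sum>y\<in>A. real_of_int (qchar (sqnorm (x - y))))"
  define e where "e = real_of_int (qchar (-1::'a))"
  have sz: "real (SQ A) + real (ZR A) / 2 = (real (card A)^2 + T) / 2"
    unfolding T_def by (rule sqzr)
  have Tc: "complex_of_real T = (\<Sum>x\<in>A. \<Sum>y\<in>A. ceta (sqnorm (x - y)))"
    by (simp add: T_def ceta_def)
  have Gk: "gsum TYPE('a) ^ (?d - 1) = complex_of_real ((e * ?q) ^ ?k)"
  proof -
    obtain j where j: "?d = 2 * j + 1" using assms(2) by (rule oddE)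
    hence jk: "?d - 1 = 2 * j" "?k = j" by simp_all
    have "gsum TYPE('a) ^ (?d - 1) = (gsum TYPE('a) ^ 2) ^ j" by (simp only: jk(1) power_mult)
    also have "\<dots> = (ceta (-1::'a) * of_nat CARD('a)) ^ j" by (simp only: gsum_sq[OF assms(1)])
    finally show ?thesis using jk(2) by (simp add: e_def ceta_def)
  qed
  have "complex_of_real T = complex_of_real ((e * ?q)^?k * (?q * ?q ^ ?d * Omega0 A - real (card A)))"
    using main_complex[OF assms, of A] Tc Gk by simp
  hence TT: "T = (e * ?q)^?k * (?q * ?q ^ ?d * Omega0 A - real (card A))" by (simp only: of_real_eq_iff)
  have ex: "?k + (1 + ?d) = ?M" using assms(2) by presburger
  have "?q ^ ?k * (?q * ?q ^ ?d) = ?q ^ (?k + (1 + ?d))" by (simp only: power_add power_one_right)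
  also have "\<dots> = ?q ^ ?M" by (simp only: ex)
  finally have pw: "?q ^ ?k * (?q * ?q ^ ?d) = ?q ^ ?M" .
  have em: "e = (if CARD('a) mod 4 = 1 then 1 else -1)"
    using qchar_minus1[OF assms(1)] by (simp add: e_def)
  have kpar: "even ?k \<longleftrightarrow> ?d mod 4 = 1" by (rule parity4[OF assms(2)])
  show ?thesis
  proof (intro conjI impI)
    assume h: "?d mod 4 = 3 \<and> CARD('a) mod 4 = 3"
    hence "e = -1" "odd ?k" using em kpar by auto
    hence ek: "(e * ?q)^?k = - (?q^?k)" by (simp add: power_mult_distrib)
    have "T = - ((?q ^ ?k * (?q * ?q ^ ?d)) * Omega0 A) + ?q^?k * real (card A)"
      using TT ek by (simp add: algebra_simps)
    hence "T = - (?q ^ ?M * Omega0 A) + ?q^?k * real (card A)" by (simp only: pw)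
    thus "real (SQ A) + real (ZR A) / 2 =
              real (card A)^2 / 2 - ?q ^ ?M / 2 * Omega0 A + ?q ^ ?k * real (card A) / 2"
      using sz by (simp add: field_simps)
  next
    assume h: "?d mod 4 = 1 \<or> (?d mod 4 = 3 \<and> CARD('a) mod 4 = 1)"
    have "(e * ?q)^?k = ?q^?k"
      using h em kpar by (auto simp: power_mult_distrib)
    hence "T = (?q ^ ?k * (?q * ?q ^ ?d)) * Omega0 A - ?q^?k * real (card A)"
      using TT by (simp add: algebra_simps)
    hence "T = ?q ^ ?M * Omega0 A - ?q^?k * real (card A)" by (simp only: pw)
    thus "real (SQ A) + real (ZR A) / 2 =
              real (card A)^2 / 2 + ?q ^ ?M / 2 * Omega0 A - ?q ^ ?k * real (card A) / 2"
      using sz by (simp add: field_simps)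
  qed
qed

end
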